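(* Let $(N,M_0)$ be a three-level PT-net system with transitions $T$ partitioned into low-level $L$, downgrading $D$ and high-level $H$. Then $(N,M_0)$ has the property BINI if and only if for every reachable marking $M_1$ of $(N,M_0)$ and every $h\in H$, $M_1[h\rangle M_2$ implies $\mathcal{L}(N\setminus(H\cup D),M_1)=\mathcal{L}(N\setminus(H\cup D),M_2)$.
   Context: A PT-net is $N=(P,T,F)$ with $P,T$ finite disjoint and $F:(P\times T)\cup(T\times P)\to\mathbb{N}$; markings $M:P\to\mathbb{N}$; $t$ enabled at $M$ ($M[t\rangle$) iff $M(p)\ge F(p,t)$ for all $p$, firing gives $M'(p)=M(p)+F(t,p)-F(p,t)$ ($M[t\rangle M'$); extended to sequences. $N\setminus T'$ deletes the transitions of $T'$. $\mathcal{L}(N\setminus(H\cup D),M)$ is the set of all $s\in L^*$ with $M[s\rangle$. For systems with disjoint place sets, $\mathcal{N}_1|\mathcal{N}_2$ has the union of places, the union of transitions (shared transitions synchronize, arcs inherited from each component on its own places), and union of initial markings; a high-level net system has only high-level transitions. In a two-level system (low $L$, high $H$) transitions in $L$ are observable, those in $H$ unobservable; weak bisimilarity $\approx$ is the existence of a relation between reachable markings containing the initial pair such that, for related $(M,M')$ and symmetrically, an observable step $M[l\rangle$ is matched by unobservable steps, $l$, unobservable steps leading to a related pair, and an unobservable step is matched by unobservable steps leading to a related pair. A two-level system $\mathcal{N}$ has BNDC iff for every high-level net system $\mathcal{N}'$ (places disjoint from those of $\mathcal{N}$) with transition set $H'$ disjoint from $L$, $\mathcal{N}\setminus H\approx(\mathcal{N}|\mathcal{N}')\setminus(H\setminus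 H')$. The three-level system $(N,M_0)$ has BINI iff the two-level system $(N\setminus D,M)$ (low $L$, high $H$) has BNDC for $M=M_0$ and for every marking $M$ with $M_0[\upsilon d\rangle M$ in $N$ for some $\upsilon\in T^*$, $d\in D$. *)

theory Defs
  imports Main
begin

text \<open>A PT-net: finite place set, finite transition set (disjoint since they live in
different types), and the flow function F split into F(p,t) = pre p t and F(t,p) = post t p.
Markings are functions 'p => nat (only values on places matter).\<close>

record ('p, 't) ptnet =
  places :: "'p set"
  trans  :: "'t set"
  pre    :: "'p \<Rightarrow> 't \<Rightarrow> nat"
  post   :: "'t \<Rightarrow> 'p \<Rightarrow> nat"

definition net_wf :: "('p, 't) ptnet \<Rightarrow> bool" where
  "net_wf N \<longleftrightarrow> finite (places N) \<and> finite (trans N)"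

definition enabled :: "('p, 't) ptnet \<Rightarrow> ('p \<Rightarrow> nat) \<Rightarrow> 't \<Rightarrow> bool" where
  "enabled N M t \<longleftrightarrow> t \<in> trans N \<and> (\<forall>p \<in> places N. pre N p t \<le> M p)"

definition fire :: "('p, 't) ptnet \<Rightarrow> ('p \<Rightarrow> nat) \<Rightarrow> 't \<Rightarrow> ('p \<Rightarrow> nat)" where
  "fire N M t = (\<lambda>p. if p \<in> places N then M p + post N t p - pre N p t else M p)"

text \<open>fires N M s M' means M[s>M'.\<close>
fun fires :: "('p, 't) ptnet \<Rightarrow> ('p \<Rightarrow> nat) \<Rightarrow> 't list \<Rightarrow> ('p \<Rightarrow> nat) \<Rightarrow> bool" where
  "fires N M [] M' \<longleftrightarrow> M' = M"
| "fires N M (t # s) M' \<longleftrightarrow> enabled N M t \<and> fires N (fire N M t) s M'"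

definition reach :: "('p, 't) ptnet \<Rightarrow> ('p \<Rightarrow> nat) \<Rightarrow> ('p \<Rightarrow> nat) set" where
  "reach N M0 = {M. \<exists>s. fires N M0 s M}"

text \<open>Language: all firable sequences (these are automatically over trans N).\<close>
definition lang :: "('p, 't) ptnet \<Rightarrow> ('p \<Rightarrow> nat) \<Rightarrow> 't list set" where
  "lang N M = {s. set s \<subseteq> trans N \<and> (\<exists>M'. fires N M s M')}"

definition del_trans :: "('p, 't) ptnet \<Rightarrow> 't set \<Rightarrow> ('p, 't) ptnet" (infixl "\<setminus>\<^sub>N" 65) where
  "N \<setminus>\<^sub>N T' = N\<lparr>trans := trans N - T'\<rparr>"

definition tau_steps :: "('p, 't) ptnet \<Rightarrow> 't set \<Rightarrow> ('p \<Rightarrow> nat) \<Rightarrow> ('p \<Rightarrow> nat) \<Rightarrow> bool" where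
  "tau_steps N Lo M M' \<longleftrightarrow> (\<exists>s. set s \<inter> Lo = {} \<and> fires N M s M')"

definition weak_sim_step ::
  "('p, 't) ptnet \<Rightarrow> ('q, 't) ptnet \<Rightarrow> 't set \<Rightarrow> (('p \<Rightarrow> nat) \<times> ('q \<Rightarrow> nat)) set \<Rightarrow> bool" where
  "weak_sim_step N1 N2 Lo R \<longleftrightarrow>
     (\<forall>(M, M') \<in> R.
        (\<forall>l \<in> Lo. \<forall>M1. fires N1 M [l] M1 \<longrightarrow>
            (\<exists>Ma Mb M2. tau_steps N2 Lo M' Ma \<and> fires N2 Ma [l] Mb \<and> tau_steps N2 Lo Mb M2
                          \<and> (M1, M2) \<in> R))
      \<and> (\<forall>u. u \<notin> Lo \<longrightarrow> (\<forall>M1. fires N1 M [u] M1 \<longrightarrow>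
            (\<exists>M2. tau_steps N2 Lo M' M2 \<and> (M1, M2) \<in> R))))"

definition weak_bisimilar ::
  "('p, 't) ptnet \<Rightarrow> ('p \<Rightarrow> nat) \<Rightarrow> ('q, 't) ptnet \<Rightarrow> ('q \<Rightarrow> nat) \<Rightarrow> 't set \<Rightarrow> bool" where
  "weak_bisimilar N1 M01 N2 M02 Lo \<longleftrightarrow>
     (\<exists>R. (M01, M02) \<in> R \<and> R \<subseteq> reach N1 M01 \<times> reach N2 M02
          \<and> weak_sim_step N1 N2 Lo R \<and> weak_sim_step N2 N1 Lo (converse R))"

text \<open>The environment N' has places from the fresh type nat (so they are disjoint from the
places of N) and transitions of type 't + nat (it may share transitions Inl h with N,
or have completely fresh ones).\<close>

definition lift_net :: "('p, 't) ptnet \<Rightarrow> ('p + nat, 't + nat) ptnet" where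
  "lift_net N = \<lparr>places = Inl ` places N, trans = Inl ` trans N,
     pre = (\<lambda>p t. case (p, t) of (Inl q, Inl u) \<Rightarrow> pre N q u | _ \<Rightarrow> 0),
     post = (\<lambda>t p. case (t, p) of (Inl u, Inl q) \<Rightarrow> post N u q | _ \<Rightarrow> 0)\<rparr>"

definition lift_env :: "(nat, 't + nat) ptnet \<Rightarrow> ('p + nat, 't + nat) ptnet" where
  "lift_env N' = \<lparr>places = Inr ` places N', trans = trans N',
     pre = (\<lambda>p t. case p of Inr q \<Rightarrow> pre N' q t | Inl _ \<Rightarrow> 0),
     post = (\<lambda>t p. case p of Inr q \<Rightarrow> post N' t q | Inl _ \<Rightarrow> 0)\<rparr>"

text \<open>N1 | N2 for nets with disjoint place sets: shared transitions synchronize, each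
component contributes arcs on its own places.\<close>
definition par_net :: "('p, 't) ptnet \<Rightarrow> ('p, 't) ptnet \<Rightarrow> ('p, 't) ptnet" where
  "par_net N1 N2 = \<lparr>places = places N1 \<union> places N2, trans = trans N1 \<union> trans N2,
     pre = (\<lambda>p t. if p \<in> places N1 \<and> t \<in> trans N1 then pre N1 p t
                  else if p \<in> places N2 \<and> t \<in> trans N2 then pre N2 p t else 0),
     post = (\<lambda>t p. if p \<in> places N1 \<and> t \<in> trans N1 then post N1 t p
                  else if p \<in> places N2 \<and> t \<in> trans N2 then post N2 t p else 0)\<rparr>"

definition lift_mark :: "('p \<Rightarrow> nat) \<Rightarrow> ('p + nat \<Rightarrow> nat)" where
  "lift_mark M = (\<lambda>p. case p of Inl q \<Rightarrow> M q | Inr _ \<Rightarrow> 0)"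

definition union_mark :: "('p \<Rightarrow> nat) \<Rightarrow> (nat \<Rightarrow> nat) \<Rightarrow> ('p + nat \<Rightarrow> nat)" where
  "union_mark M M' = (\<lambda>p. case p of Inl q \<Rightarrow> M q | Inr n \<Rightarrow> M' n)"

definition BNDC :: "('p, 't) ptnet \<Rightarrow> ('p \<Rightarrow> nat) \<Rightarrow> 't set \<Rightarrow> 't set \<Rightarrow> bool" where
  "BNDC N M0 L H \<longleftrightarrow>
     (\<forall>(N' :: (nat, 't + nat) ptnet) M0'.
        net_wf N' \<and> trans N' \<inter> Inl ` L = {} \<longrightarrow>
        weak_bisimilar (lift_net (N \<setminus>\<^sub>N H)) (lift_mark M0)
          (par_net (lift_net N) (lift_env N') \<setminus>\<^sub>N (Inl ` H - trans N'))
          (union_mark M0 M0') (Inl ` L))"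

definition BINI :: "('p, 't) ptnet \<Rightarrow> ('p \<Rightarrow> nat) \<Rightarrow> 't set \<Rightarrow> 't set \<Rightarrow> 't set \<Rightarrow> bool" where
  "BINI N M0 L D H \<longleftrightarrow>
     BNDC (N \<setminus>\<^sub>N D) M0 L H \<and>
     (\<forall>M \<upsilon> d. d \<in> D \<and> fires N M0 (\<upsilon> @ [d]) M \<longrightarrow> BNDC (N \<setminus>\<^sub>N D) M L H)"

end

theory Submission
  imports Defs
begin


definition proj :: "('p + nat \<Rightarrow> nat) \<Rightarrow> 'p \<Rightarrow> nat" where
  "proj C = (\<lambda>q. C (Inl q))"

lemma proj_apply: "proj C q = C (Inl q)" by (simp add: proj_def)

definition cmpn :: "('p,'t) ptnet \<Rightarrow> 't set \<Rightarrow> (nat, 't + nat) ptnet \<Rightarrow> ('p + nat, 't + nat) ptnet" where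
  "cmpn X H N' = par_net (lift_net X) (lift_env N') \<setminus>\<^sub>N (Inl ` H - trans N')"

lemma del_simps[simp]:
  "places (N \<setminus>\<^sub>N S) = places N" "trans (N \<setminus>\<^sub>N S) = trans N - S"
  "pre (N \<setminus>\<^sub>N S) = pre N" "post (N \<setminus>\<^sub>N S) = post N"
  by (simp_all add: del_trans_def)

lemma fire_del[simp]: "fire (N \<setminus>\<^sub>N S) = fire N"
  by (simp add: fire_def fun_eq_iff)

lemma enabled_del[simp]: "enabled (N \<setminus>\<^sub>N S) M t \<longleftrightarrow> t \<notin> S \<and> enabled N M t"
  by (auto simp add: enabled_def)

lemma del_del: "N \<setminus>\<^sub>N D \<setminus>\<^sub>N H = N \<setminus>\<^sub>N (H \<union> D)"
  by (simp add: del_trans_def Un_commute Diff_Un Diff_eq Int_assoc)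

lemma fires_append: "fires N M (s @ s') M'' \<longleftrightarrow> (\<exists>M'. fires N M s M' \<and> fires N M' s' M'')"
  by (induction s arbitrary: M) auto

lemma fires_det: "fires N M s M1 \<Longrightarrow> fires N M s M2 \<Longrightarrow> M1 = M2"
  by (induction s arbitrary: M) auto

lemma fires_del: "fires (N \<setminus>\<^sub>N S) M s M' \<Longrightarrow> fires N M s M'"
  by (induction s arbitrary: M) auto

lemma enabled_trans: "enabled N M t \<Longrightarrow> t \<in> trans N" by (simp add: enabled_def)

lemma fires_set: "fires N M s M' \<Longrightarrow> set s \<subseteq> trans N"
  by (induction s arbitrary: M) (auto simp: enabled_def)

lemma lang_alt: "lang N M = {s. \<exists>M'. fires N M s M'}"
  by (auto simp: lang_def dest: fires_set)

lemma lang_Cons: "t # w \<in> lang Y M \<longleftrightarrow> enabled Y M t \<and> w \<in> lang Y (fire Y M t)"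
  by (auto simp: lang_alt)

lemma lang_Nil[simp]: "[] \<in> lang Y M" by (auto simp: lang_alt)

lemma lang_fire: "enabled Y M t \<Longrightarrow> lang Y (fire Y M t) = {w. t # w \<in> lang Y M}"
  by (auto simp: lang_Cons)

lemma lang_eq_step:
  assumes "lang Y M = lang Y M'" "enabled Y M t"
  shows "enabled Y M' t \<and> lang Y (fire Y M t) = lang Y (fire Y M' t)"
proof -
  have "[t] \<in> lang Y M" using assms(2) by (simp add: lang_Cons)
  then have e: "enabled Y M' t" using assms(1) by (simp add: lang_Cons)
  show ?thesis using e assms by (simp add: lang_fire)
qed

lemma reach_split:
  "fires N M0 s M1 \<Longrightarrow> fires (N \<setminus>\<^sub>N D) M0 s M1 \<or>
     (\<exists>\<upsilon> d M s'. d \<in> D \<and> fires N M0 (\<upsilon> @ [d]) M \<and> fires (N \<setminus>\<^sub>N D) M s' M1)"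
proof (induction s arbitrary: M0)
  case Nil then show ?case by simp
next
  case (Cons t s)
  then have en: "enabled N M0 t" and f: "fires N (fire N M0 t) s M1" by auto
  from Cons.IH[OF f] show ?case
  proof
    assume a: "fires (N \<setminus>\<^sub>N D) (fire N M0 t) s M1"
    show ?thesis
    proof (cases "t \<in> D")
      case True
      then show ?thesis using a en by (intro disjI2 exI[of _ "[]"]) auto
    next
      case False then show ?thesis using a en by auto
    qed
  next
    assume "\<exists>\<upsilon> d M s'. d \<in> D \<and> fires N (fire N M0 t) (\<upsilon> @ [d]) M \<and> fires (N \<setminus>\<^sub>N D) M s' M1"
    then obtain \<upsilon> d M s' where "d \<in> D" "fires N (fire N M0 t) (\<upsilon> @ [d]) M" "fires (N \<setminus>\<^sub>N D) M s' M1"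
      by blast
    then show ?thesis using en by (intro disjI2 exI[of _ "t # \<upsilon>"]) auto
  qed
qed

lemma tau_triv: "trans N1 \<subseteq> Lo \<Longrightarrow> tau_steps N1 Lo K K' \<Longrightarrow> K' = K"
  unfolding tau_steps_def
  by (metis (no_types, lifting) disjoint_iff enabled_trans fires.elims(2) list.set_intros(1) subsetD)

lemma enabled_lift: "enabled (lift_net Y) K u \<longleftrightarrow> (\<exists>t. u = Inl t \<and> enabled Y (proj K) t)"
  by (auto simp: enabled_def lift_net_def proj_apply)

lemma proj_fire_lift: "proj (fire (lift_net Y) K (Inl t)) = fire Y (proj K) t"
  by (auto simp: fun_eq_iff fire_def lift_net_def proj_apply)

lemma cmpn_simps:
  "places (cmpn X H N') = Inl ` places X \<union> Inr ` places N'"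
  "trans (cmpn X H N') = (Inl ` trans X \<union> trans N') - (Inl ` H - trans N')"
  "pre (cmpn X H N') (Inl q) u = (case u of Inl t \<Rightarrow> if q \<in> places X \<and> t \<in> trans X then pre X q t else 0 | Inr _ \<Rightarrow> 0)"
  "post (cmpn X H N') u (Inl q) = (case u of Inl t \<Rightarrow> if q \<in> places X \<and> t \<in> trans X then post X t q else 0 | Inr _ \<Rightarrow> 0)"
  "pre (cmpn X H N') (Inr n) u = (if n \<in> places N' \<and> u \<in> trans N' then pre N' n u else 0)"
  "post (cmpn X H N') u (Inr n) = (if n \<in> places N' \<and> u \<in> trans N' then post N' u n else 0)"
  by (auto simp: cmpn_def par_net_def lift_net_def lift_env_def split: sum.splits)

lemma proj_fire_comp:
  "proj (fire (cmpn X H N') C u) = (case u of Inl t \<Rightarrow> if t \<in> trans X then fire X (proj C) t else proj C | Inr _ \<Rightarrow> proj C)"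
  by (auto simp: fun_eq_iff fire_def cmpn_simps proj_apply split: sum.splits)

lemma fire_comp_Inr:
  "fire (cmpn X H N') C u (Inr n) = (if n \<in> places N' then C (Inr n) + (if u \<in> trans N' then post N' u n else 0) - (if u \<in> trans N' then pre N' n u else 0) else C (Inr n))"
  by (auto simp: fire_def cmpn_simps)

lemma enabled_comp_Inl:
  "enabled (cmpn X H N') C (Inl t) \<Longrightarrow> t \<in> trans X \<Longrightarrow> enabled X (proj C) t"
proof -
  assume e: "enabled (cmpn X H N') C (Inl t)" and t: "t \<in> trans X"
  show ?thesis unfolding enabled_def
  proof (intro conjI ballI)
    fix p assume p: "p \<in> places X"
    then have "Inl p \<in> places (cmpn X H N')" by (simp add: cmpn_simps)
    then have "pre (cmpn X H N') (Inl p) (Inl t) \<le> C (Inl p)" using e by (simp add: enabled_def)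
    then show "pre X p t \<le> proj C p" using p t by (simp add: cmpn_simps proj_apply)
  qed (rule t)
qed

lemma fires_comp_proj:
  "fires (cmpn X H N') C \<sigma> C' \<Longrightarrow> \<exists>s. fires X (proj C) s (proj C')"
proof (induction \<sigma> arbitrary: C)
  case Nil then show ?case by (intro exI[of _ "[]"]) simp
next
  case (Cons u \<sigma>)
  then have en: "enabled (cmpn X H N') C u" and f: "fires (cmpn X H N') (fire (cmpn X H N') C u) \<sigma> C'" by auto
  obtain s where s: "fires X (proj (fire (cmpn X H N') C u)) s (proj C')" using Cons.IH[OF f] by blast
  show ?case
  proof (cases "\<exists>t. u = Inl t \<and> t \<in> trans X")
    case True
    then obtain t where t: "u = Inl t" "t \<in> trans X" by blast
    have e2: "enabled X (proj C) t" using en t enabled_comp_Inl[of X H N' C t] by simp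
    have "proj (fire (cmpn X H N') C u) = fire X (proj C) t" using t proj_fire_comp[of X H N' C u] by simp
    then have "fires X (proj C) (t # s) (proj C')" using s e2 by simp
    then show ?thesis by blast
  next
    case False
    then have "proj (fire (cmpn X H N') C u) = proj C"
      using proj_fire_comp[of X H N' C u] by (auto split: sum.splits)
    then show ?thesis using s by metis
  qed
qed




lemma reach_trans: "K \<in> reach A K0 \<Longrightarrow> K' \<in> reach A K \<Longrightarrow> K' \<in> reach A K0"
proof -
  assume "K \<in> reach A K0" "K' \<in> reach A K"
  then obtain s s' where "fires A K0 s K" "fires A K s' K'" unfolding reach_def by blast
  then have "fires A K0 (s @ s') K'" using fires_append by blast
  then show ?thesis unfolding reach_def by blast
qed

lemma reach_step: "K \<in> reach A K0 \<Longrightarrow> fires A K [u] K' \<Longrightarrow> K' \<in> reach A K0"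
proof -
  assume a: "K \<in> reach A K0" "fires A K [u] K'"
  then have "K' \<in> reach A K" unfolding reach_def by blast
  with a(1) show ?thesis by (rule reach_trans)
qed

lemma proj_lift_mark[simp]: "proj (lift_mark M) = M"
  by (simp add: proj_def lift_mark_def)
lemma proj_union_mark[simp]: "proj (union_mark M M') = M"
  by (simp add: proj_def union_mark_def)

lemma wssI:
  assumes "\<And>M M' l M1. (M, M') \<in> R \<Longrightarrow> l \<in> Lo \<Longrightarrow> fires N1 M [l] M1 \<Longrightarrow>
     \<exists>Ma Mb M2. tau_steps N2 Lo M' Ma \<and> fires N2 Ma [l] Mb \<and> tau_steps N2 Lo Mb M2 \<and> (M1, M2) \<in> R"
  and "\<And>M M' u M1. (M, M') \<in> R \<Longrightarrow> u \<notin> Lo \<Longrightarrow> fires N1 M [u] M1 \<Longrightarrow>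
     \<exists>M2. tau_steps N2 Lo M' M2 \<and> (M1, M2) \<in> R"
  shows "weak_sim_step N1 N2 Lo R"
  unfolding weak_sim_step_def using assms by blast

lemma tau_refl: "tau_steps N Lo M M"
  unfolding tau_steps_def by (intro exI[of _ "[]"]) simp

lemma bwd:
  fixes N :: "('p, 't) ptnet"
  assumes tr: "trans N = L \<union> D \<union> H"
    and d1: "L \<inter> D = {}" and d2: "L \<inter> H = {}" and d3: "D \<inter> H = {}"
    and cond: "\<forall>M1 \<in> reach N M0. \<forall>h \<in> H. \<forall>M2. fires N M1 [h] M2 \<longrightarrow>
            lang (N \<setminus>\<^sub>N (H \<union> D)) M1 = lang (N \<setminus>\<^sub>N (H \<union> D)) M2"
    and Mr: "M \<in> reach N M0"
  shows "BNDC (N \<setminus>\<^sub>N D) M L H"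
  unfolding BNDC_def
proof (intro allI impI)
  fix N' :: "(nat, 't + nat) ptnet" and M0' :: "nat \<Rightarrow> nat"
  assume env: "net_wf N' \<and> trans N' \<inter> Inl ` L = {}"
  define X where "X = N \<setminus>\<^sub>N D"
  define Y where "Y = N \<setminus>\<^sub>N (H \<union> D)"
  have XY: "X \<setminus>\<^sub>N H = Y" by (simp add: X_def Y_def del_del)
  have trX: "trans X = L \<union> H" using tr d1 d3 by (auto simp: X_def)
  have trY: "trans Y = L" using tr d1 d2 by (auto simp: Y_def)
  have fX: "fire X = fire N" "fire Y = fire N" by (simp_all add: X_def Y_def)
  have eX: "\<And>M t. enabled X M t \<Longrightarrow> enabled N M t" by (simp add: X_def)
  have eY: "\<And>M t. t \<in> L \<Longrightarrow> enabled Y M t \<longleftrightarrow> enabled X M t"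
    using d1 d2 by (auto simp: X_def Y_def)
  define S1 where "S1 = lift_net Y"
  define Cn where "Cn = cmpn X H N'"
  define R where "R = {(K, C). K \<in> reach S1 (lift_mark M) \<and> C \<in> reach Cn (union_mark M M0')
                            \<and> lang Y (proj K) = lang Y (proj C)}"
  have trS1: "trans S1 = Inl ` L" using trY by (simp add: S1_def lift_net_def)
  have reachN: "proj C \<in> reach N M0" if Cr0: "C \<in> reach Cn (union_mark M M0')" for C
  proof -
    obtain \<sigma> where "fires Cn (union_mark M M0') \<sigma> C" using Cr0 unfolding reach_def by blast
    then obtain s where "fires X (proj (union_mark M M0')) s (proj C)"
      using fires_comp_proj[of X H N'] unfolding Cn_def by blast
    then have "fires N M s (proj C)" unfolding X_def by (simp add: fires_del)
    then have "proj C \<in> reach N M" unfolding reach_def by blast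
    then show ?thesis using Mr reach_trans by blast
  qed
  have enC: "enabled Cn C (Inl t)" if "t \<in> L" "enabled X (proj C) t" for C t
  proof -
    have "Inl t \<notin> trans N'" using env that(1) by auto
    moreover have "t \<notin> H" using d2 that(1) by auto
    ultimately show ?thesis using that trX
      by (auto simp: enabled_def Cn_def cmpn_simps proj_apply)
  qed
  have sim1: "weak_sim_step S1 Cn (Inl ` L) R"
  proof (rule wssI)
    fix K C l' K1
    assume KC: "(K, C) \<in> R" and l': "l' \<in> Inl ` L" and f: "fires S1 K [l'] K1"
    obtain l where l: "l \<in> L" and ll': "l' = Inl l" using l' by blast
    note f = f[unfolded ll']
    have en: "enabled Y (proj K) l" and K1: "K1 = fire S1 K (Inl l)"
      using f by (auto simp: S1_def enabled_lift)
    have lk: "lang Y (proj K) = lang Y (proj C)" using KC by (simp add: R_def)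
    from lang_eq_step[OF lk en] have en2: "enabled Y (proj C) l"
      and ll: "lang Y (fire Y (proj K) l) = lang Y (fire Y (proj C) l)" by auto
    define C1 where "C1 = fire Cn C (Inl l)"
    have e3: "enabled Cn C (Inl l)" using enC l en2 eY by blast
    have pc: "proj C1 = fire Y (proj C) l"
      using proj_fire_comp[of X H N' C "Inl l"] trX l fX by (simp add: C1_def Cn_def)
    have pk: "proj K1 = fire Y (proj K) l" using K1 by (simp add: S1_def proj_fire_lift)
    have fc: "fires Cn C [Inl l] C1" using e3 by (simp add: C1_def)
    have Kr: "K \<in> reach S1 (lift_mark M)" and Cr: "C \<in> reach Cn (union_mark M M0')" using KC by (simp_all add: R_def)
    have "K1 \<in> reach S1 (lift_mark M)" using reach_step[OF Kr f] .
    moreover have "C1 \<in> reach Cn (union_mark M M0')" using reach_step[OF Cr fc] .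
    moreover have "lang Y (proj K1) = lang Y (proj C1)" using pc pk ll by simp
    ultimately have "(K1, C1) \<in> R" unfolding R_def by simp
    then show "\<exists>Ma Mb M2. tau_steps Cn (Inl ` L) C Ma \<and> fires Cn Ma [l'] Mb \<and>
         tau_steps Cn (Inl ` L) Mb M2 \<and> (K1, M2) \<in> R"
      unfolding ll' using fc tau_refl by blast
  next
    fix K C u K1
    assume "(K, C) \<in> R" "u \<notin> Inl ` L" and fu: "fires S1 K [u] K1"
    from fu have "enabled S1 K u" by simp
    then have "u \<in> trans S1" by (rule enabled_trans)
    then have False using trS1 \<open>u \<notin> Inl ` L\<close> by simp
    then show "\<exists>M2. tau_steps Cn (Inl ` L) C M2 \<and> (K1, M2) \<in> R" ..
  qed
  have sim2: "weak_sim_step Cn S1 (Inl ` L) (converse R)"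
  proof (rule wssI)
    fix C K l' C1
    assume KC': "(C, K) \<in> converse R" and l': "l' \<in> Inl ` L" and f: "fires Cn C [l'] C1"
    obtain l where l: "l \<in> L" and ll': "l' = Inl l" using l' by blast
    note f = f[unfolded ll']
    have KC: "(K, C) \<in> R" using KC' by simp
    have e: "enabled Cn C (Inl l)" and C1: "C1 = fire Cn C (Inl l)" using f by auto
    have lX: "l \<in> trans X" using trX l by auto
    have enx: "enabled X (proj C) l" using enabled_comp_Inl[of X H N' C l] e lX by (simp add: Cn_def)
    then have en: "enabled Y (proj C) l" using eY l by blast
    have lk: "lang Y (proj C) = lang Y (proj K)" using KC by (simp add: R_def)
    from lang_eq_step[OF lk en] have en2: "enabled Y (proj K) l"
      and ll: "lang Y (fire Y (proj C) l) = lang Y (fire Y (proj K) l)" by auto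
    define K1 where "K1 = fire S1 K (Inl l)"
    have e3: "enabled S1 K (Inl l)" using en2 by (simp add: S1_def enabled_lift)
    have pc: "proj C1 = fire Y (proj C) l"
      using proj_fire_comp[of X H N' C "Inl l"] lX fX by (simp add: C1 Cn_def)
    have pk: "proj K1 = fire Y (proj K) l" by (simp add: K1_def S1_def proj_fire_lift)
    have fk: "fires S1 K [Inl l] K1" using e3 by (simp add: K1_def)
    have Kr: "K \<in> reach S1 (lift_mark M)" and Cr: "C \<in> reach Cn (union_mark M M0')" using KC by (simp_all add: R_def)
    have "K1 \<in> reach S1 (lift_mark M)" using reach_step[OF Kr fk] .
    moreover have "C1 \<in> reach Cn (union_mark M M0')" using reach_step[OF Cr f] .
    moreover have "lang Y (proj K1) = lang Y (proj C1)" using pc pk ll by simp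
    ultimately have "(K1, C1) \<in> R" unfolding R_def by simp
    then show "\<exists>Ma Mb M2. tau_steps S1 (Inl ` L) K Ma \<and> fires S1 Ma [l'] Mb \<and>
         tau_steps S1 (Inl ` L) Mb M2 \<and> (C1, M2) \<in> converse R"
      unfolding ll' using fk tau_refl by blast
  next
    fix C K u C1
    assume KC': "(C, K) \<in> converse R" and u: "u \<notin> Inl ` L" and f: "fires Cn C [u] C1"
    have KC: "(K, C) \<in> R" using KC' by simp
    have e: "enabled Cn C u" and C1: "C1 = fire Cn C u" using f by auto
    have Cr: "C \<in> reach Cn (union_mark M M0')" using KC by (simp add: R_def)
    have lk: "lang Y (proj K) = lang Y (proj C)" using KC by (simp add: R_def)
    have "lang Y (proj C1) = lang Y (proj C)"
    proof (cases "\<exists>t. u = Inl t \<and> t \<in> trans X")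
      case True
      then obtain t where t: "u = Inl t" "t \<in> trans X" by blast
      then have tH: "t \<in> H" using u trX by auto
      have enx: "enabled X (proj C) t" using enabled_comp_Inl[of X H N' C t] e t by (simp add: Cn_def)
      have pc: "proj C1 = fire N (proj C) t"
        using proj_fire_comp[of X H N' C u] t fX by (simp add: C1 Cn_def)
      have "fires N (proj C) [t] (fire N (proj C) t)" using eX enx by simp
      then show ?thesis using cond reachN[OF Cr] tH pc by (simp add: Y_def)
    next
      case False
      then have "proj C1 = proj C"
        using proj_fire_comp[of X H N' C u] by (auto simp: C1 Cn_def split: sum.splits)
      then show ?thesis by simp
    qed
    moreover have "C1 \<in> reach Cn (union_mark M M0')" using reach_step[OF Cr f] .
    ultimately have "(K, C1) \<in> R" using KC lk unfolding R_def by simp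
    then show "\<exists>M2. tau_steps S1 (Inl ` L) K M2 \<and> (C1, M2) \<in> converse R"
      using tau_refl by blast
  qed
  have init: "(lift_mark M, union_mark M M0') \<in> R"
    by (auto simp: R_def reach_def intro: exI[of _ "[]"])
  have "weak_bisimilar S1 (lift_mark M) Cn (union_mark M M0') (Inl ` L)"
    unfolding weak_bisimilar_def
    by (intro exI[of _ R]) (use init sim1 sim2 in \<open>auto simp: R_def\<close>)
  then show "weak_bisimilar (lift_net (N \<setminus>\<^sub>N D \<setminus>\<^sub>N H)) (lift_mark M)
          (par_net (lift_net (N \<setminus>\<^sub>N D)) (lift_env N') \<setminus>\<^sub>N (Inl ` H - ptnet.trans N'))
          (union_mark M M0') (Inl ` L)"
    using XY by (simp add: S1_def Cn_def cmpn_def X_def)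
qed




definition cenv :: "'t set \<Rightarrow> (nat, 't + nat) ptnet" where
  "cenv H = \<lparr>places = {0}, trans = Inl ` H, pre = (\<lambda>q u. 1), post = (\<lambda>u q. 0)\<rparr>"

lemma cenv_simps[simp]: "places (cenv H) = {0}" "trans (cenv H) = Inl ` H"
  "pre (cenv H) q u = 1" "post (cenv H) u q = 0"
  by (simp_all add: cenv_def)

definition cnt :: "'t set \<Rightarrow> 't list \<Rightarrow> nat" where
  "cnt H s = length (filter (\<lambda>t. t \<in> H) s)"

lemma cnt_simps[simp]: "cnt H [] = 0" "cnt H (t # s) = (if t \<in> H then 1 else 0) + cnt H s"
  "cnt H (s @ s') = cnt H s + cnt H s'"
  by (simp_all add: cnt_def)

lemma wss_obs: "weak_sim_step N1 N2 Lo R \<Longrightarrow> (M, M') \<in> R \<Longrightarrow> l \<in> Lo \<Longrightarrow> fires N1 M [l] M1 \<Longrightarrow>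
   \<exists>Ma Mb M2. tau_steps N2 Lo M' Ma \<and> fires N2 Ma [l] Mb \<and> tau_steps N2 Lo Mb M2 \<and> (M1, M2) \<in> R"
  unfolding weak_sim_step_def by blast

lemma wss_unobs: "weak_sim_step N1 N2 Lo R \<Longrightarrow> (M, M') \<in> R \<Longrightarrow> u \<notin> Lo \<Longrightarrow> fires N1 M [u] M1 \<Longrightarrow>
   \<exists>M2. tau_steps N2 Lo M' M2 \<and> (M1, M2) \<in> R"
  unfolding weak_sim_step_def by blast

lemma enC_gen:
  assumes "t \<in> trans X" "t \<notin> H" "Inl t \<notin> trans N'" "enabled X (proj C) t"
  shows "enabled (cmpn X H N') C (Inl t)"
  using assms by (auto simp: enabled_def cmpn_simps proj_apply)

lemma fire_lifted:
  assumes "fires X M s M'" "M = proj C" "cnt H s \<le> C (Inr 0)"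
  shows "\<exists>C'. fires (cmpn X H (cenv H)) C (map Inl s) C' \<and> proj C' = M' \<and> C' (Inr 0) = C (Inr 0) - cnt H s"
  using assms
proof (induction s arbitrary: M C)
  case Nil then show ?case by simp
next
  case (Cons t s)
  have en: "enabled X (proj C) t" and f: "fires X (fire X (proj C) t) s M'" using Cons.prems by auto
  have tX: "t \<in> trans X" using en by (rule enabled_trans)
  have e: "enabled (cmpn X H (cenv H)) C (Inl t)"
    using en tX Cons.prems(3) by (auto simp: enabled_def cmpn_simps proj_apply)
  define C1 where "C1 = fire (cmpn X H (cenv H)) C (Inl t)"
  have p1: "proj C1 = fire X (proj C) t" using proj_fire_comp[of X H "cenv H" C "Inl t"] tX
    by (simp add: C1_def)
  have c1: "C1 (Inr 0) = C (Inr 0) - (if t \<in> H then 1 else 0)"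
    using fire_comp_Inr[of X H "cenv H" C "Inl t" 0] by (auto simp: C1_def)
  have "cnt H s \<le> C1 (Inr 0)" using c1 Cons.prems(3) by simp
  from Cons.IH[OF f p1[symmetric] this] obtain C' where
    "fires (cmpn X H (cenv H)) C1 (map Inl s) C'" "proj C' = M'" "C' (Inr 0) = C1 (Inr 0) - cnt H s"
    by blast
  then show ?case using e c1 Cons.prems(3) by (intro exI[of _ C']) (simp add: C1_def)
qed

lemma track:
  assumes ws: "weak_sim_step Cn S Lo (converse R)" and trS: "trans S \<subseteq> Lo"
  shows "fires Cn C \<sigma> C' \<Longrightarrow> (K, C) \<in> R \<Longrightarrow> \<exists>K'. (K', C') \<in> R \<and> fires S K (filter (\<lambda>u. u \<in> Lo) \<sigma>) K'"
proof (induction \<sigma> arbitrary: C K)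
  case Nil then show ?case by simp
next
  case (Cons u \<sigma>)
  define C1 where "C1 = fire Cn C u"
  have f1: "fires Cn C [u] C1" and f: "fires Cn C1 \<sigma> C'" using Cons.prems(1) by (simp_all add: C1_def)
  have KC: "(C, K) \<in> converse R" using Cons.prems(2) by simp
  show ?case
  proof (cases "u \<in> Lo")
    case True
    from wss_obs[OF ws KC True f1] obtain Ma Mb M2 where
      a: "tau_steps S Lo K Ma" "fires S Ma [u] Mb" "tau_steps S Lo Mb M2" "(C1, M2) \<in> converse R"
      by blast
    have "Ma = K" using tau_triv[OF trS a(1)] .
    moreover have "M2 = Mb" using tau_triv[OF trS a(3)] .
    ultimately have fb: "fires S K [u] Mb" and r: "(Mb, C1) \<in> R" using a by auto
    from Cons.IH[OF f r] obtain K' where "(K', C') \<in> R" "fires S Mb (filter (\<lambda>u. u \<in> Lo) \<sigma>) K'"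
      by blast
    then show ?thesis using fb True by (intro exI[of _ K']) simp
  next
    case False
    from wss_unobs[OF ws KC False f1] obtain M2 where a: "tau_steps S Lo K M2" "(C1, M2) \<in> converse R"
      by blast
    have "M2 = K" using tau_triv[OF trS a(1)] .
    then have r: "(K, C1) \<in> R" using a by simp
    from Cons.IH[OF f r] show ?thesis using False by simp
  qed
qed

lemma tau_zero:
  assumes trX: "trans X \<subseteq> L \<union> H" and t: "tau_steps (cmpn X H (cenv H)) (Inl ` L) C C'"
    and z: "C (Inr 0) = 0"
  shows "C' = C"
proof -
  obtain s where s: "set s \<inter> Inl ` L = {}" "fires (cmpn X H (cenv H)) C s C'"
    using t unfolding tau_steps_def by blast
  show ?thesis
  proof (cases s)
    case Nil then show ?thesis using s by simp
  next
    case (Cons u s')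
    then have e: "enabled (cmpn X H (cenv H)) C u" and uL: "u \<notin> Inl ` L" using s by auto
    have "u \<in> trans (cmpn X H (cenv H))" using e by (rule enabled_trans)
    then obtain h where h: "u = Inl h" "h \<in> H" using trX uL by (auto simp: cmpn_simps)
    have "Inr 0 \<in> places (cmpn X H (cenv H))" by (simp add: cmpn_simps)
    then have "pre (cmpn X H (cenv H)) (Inr 0) u \<le> C (Inr 0)" using e by (simp add: enabled_def)
    then show ?thesis using h z by (simp add: cmpn_simps)
  qed
qed

lemma lang_zero:
  assumes trX: "trans X \<subseteq> L \<union> H" and trY: "trans Y = L" and LH: "L \<inter> H = {}"
    and fY: "fire Y = fire X" and eY: "\<And>M t. t \<in> L \<Longrightarrow> enabled Y M t \<longleftrightarrow> enabled X M t"
    and ws1: "weak_sim_step (lift_net Y) (cmpn X H (cenv H)) (Inl ` L) R"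
    and ws2: "weak_sim_step (cmpn X H (cenv H)) (lift_net Y) (Inl ` L) (converse R)"
  shows "(K, C) \<in> R \<Longrightarrow> C (Inr 0) = 0 \<Longrightarrow> w \<in> lang Y (proj K) \<longleftrightarrow> w \<in> lang Y (proj C)"
proof (induction w arbitrary: K C)
  case Nil then show ?case by simp
next
  case (Cons t w)
  let ?Cn = "cmpn X H (cenv H)"
  let ?S = "lift_net Y"
  have trS: "trans ?S \<subseteq> Inl ` L" using trY by (simp add: lift_net_def)
  have inv: "fire ?Cn C (Inl t) (Inr 0) = 0" if "t \<in> L" for t
  proof -
    have "t \<notin> H" using that LH by blast
    then have "Inl t \<notin> trans (cenv H)" by auto
    then show ?thesis using Cons.prems(2) by (simp add: fire_comp_Inr)
  qed
  show ?case
  proof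
    assume "t # w \<in> lang Y (proj K)"
    then have en: "enabled Y (proj K) t" and w: "w \<in> lang Y (fire Y (proj K) t)" by (auto simp: lang_Cons)
    have tL: "t \<in> L" using enabled_trans[OF en] trY by simp
    define K1 where "K1 = fire ?S K (Inl t)"
    have fk: "fires ?S K [Inl t] K1" using en by (simp add: K1_def enabled_lift)
    from wss_obs[OF ws1 Cons.prems(1) _ fk] tL obtain Ma Mb M2 where
      a: "tau_steps ?Cn (Inl ` L) C Ma" "fires ?Cn Ma [Inl t] Mb" "tau_steps ?Cn (Inl ` L) Mb M2" "(K1, M2) \<in> R"
      by blast
    have "Ma = C" using tau_zero[OF trX a(1) Cons.prems(2)] .
    then have e: "enabled ?Cn C (Inl t)" and mb: "Mb = fire ?Cn C (Inl t)" using a(2) by auto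
    have z: "Mb (Inr 0) = 0" using mb inv tL by simp
    have "M2 = Mb" using tau_zero[OF trX a(3) z] .
    then have r: "(K1, Mb) \<in> R" using a(4) by simp
    have "enabled X (proj K) t" using eY[OF tL] en by simp
    then have tX: "t \<in> trans X" by (rule enabled_trans)
    have enx: "enabled X (proj C) t" using enabled_comp_Inl[OF e tX] .
    have pm: "proj Mb = fire Y (proj C) t" using mb proj_fire_comp[of X H "cenv H" C "Inl t"] tX fY by simp
    have pk: "proj K1 = fire Y (proj K) t" by (simp add: K1_def proj_fire_lift)
    have "w \<in> lang Y (proj Mb)" using Cons.IH[OF r z] w pk by simp
    then show "t # w \<in> lang Y (proj C)" using enx eY tL pm by (simp add: lang_Cons)
  next
    assume "t # w \<in> lang Y (proj C)"
    then have en: "enabled Y (proj C) t" and w: "w \<in> lang Y (fire Y (proj C) t)" by (auto simp: lang_Cons)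
    have tL: "t \<in> L" using enabled_trans[OF en] trY by simp
    have enx: "enabled X (proj C) t" using eY[OF tL] en by simp
    have tX: "t \<in> trans X" using enabled_trans[OF enx] .
    have tH: "t \<notin> H" using tL LH by blast
    then have "Inl t \<notin> trans (cenv H)" by auto
    then have e: "enabled ?Cn C (Inl t)" using enC_gen[OF tX tH _ enx] by blast
    define C1 where "C1 = fire ?Cn C (Inl t)"
    have fc: "fires ?Cn C [Inl t] C1" using e by (simp add: C1_def)
    have KC: "(C, K) \<in> converse R" using Cons.prems(1) by simp
    from wss_obs[OF ws2 KC _ fc] tL obtain Ma Mb M2 where
      a: "tau_steps ?S (Inl ` L) K Ma" "fires ?S Ma [Inl t] Mb" "tau_steps ?S (Inl ` L) Mb M2" "(C1, M2) \<in> converse R"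
      by blast
    have "Ma = K" using tau_triv[OF trS a(1)] .
    then have ek: "enabled ?S K (Inl t)" and mb: "Mb = fire ?S K (Inl t)" using a(2) by auto
    have "M2 = Mb" using tau_triv[OF trS a(3)] .
    then have r: "(Mb, C1) \<in> R" using a(4) by simp
    have z: "C1 (Inr 0) = 0" using inv tL by (simp add: C1_def)
    have enk: "enabled Y (proj K) t" using ek by (simp add: enabled_lift)
    have pm: "proj C1 = fire Y (proj C) t" using proj_fire_comp[of X H "cenv H" C "Inl t"] tX fY by (simp add: C1_def)
    have pk: "proj Mb = fire Y (proj K) t" by (simp add: mb proj_fire_lift)
    have "w \<in> lang Y (proj Mb)" using Cons.IH[OF r z] w pm by simp
    then show "t # w \<in> lang Y (proj K)" using enk pk by (simp add: lang_Cons)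
  qed
qed




lemma fwd:
  fixes N :: "('p, 't) ptnet"
  assumes wf: "net_wf N" and tr: "trans N = L \<union> D \<union> H"
    and d1: "L \<inter> D = {}" and d2: "L \<inter> H = {}" and d3: "D \<inter> H = {}"
    and bndc: "BNDC (N \<setminus>\<^sub>N D) M L H"
    and fs: "fires (N \<setminus>\<^sub>N D) M s M1" and enh: "enabled N M1 h" and hH: "h \<in> H"
  shows "lang (N \<setminus>\<^sub>N (H \<union> D)) M1 = lang (N \<setminus>\<^sub>N (H \<union> D)) (fire N M1 h)"
proof -
  define X where "X = N \<setminus>\<^sub>N D"
  define Y where "Y = N \<setminus>\<^sub>N (H \<union> D)"
  define S where "S = lift_net Y"
  define Cn where "Cn = cmpn X H (cenv H)"
  have XY: "X \<setminus>\<^sub>N H = Y" by (simp add: X_def Y_def del_del)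
  have trX: "trans X = L \<union> H" using tr d1 d3 by (auto simp: X_def)
  have trY: "trans Y = L" using tr d1 d2 by (auto simp: Y_def)
  have fY: "fire Y = fire X" by (simp add: X_def Y_def)
  have eY: "\<And>M t. t \<in> L \<Longrightarrow> enabled Y M t \<longleftrightarrow> enabled X M t"
    using d1 d2 by (auto simp: X_def Y_def)
  have trS: "trans S \<subseteq> Inl ` L" using trY by (simp add: S_def lift_net_def)
  have finH: "finite H" using wf tr unfolding net_wf_def by (metis finite_Un)
  have envok: "net_wf (cenv H) \<and> trans (cenv H) \<inter> Inl ` L = {}"
    using finH d2 by (auto simp: net_wf_def)
  have bis: "weak_bisimilar S (lift_mark M) Cn (union_mark M (\<lambda>_. c)) (Inl ` L)" for c
  proof -
    have "weak_bisimilar (lift_net (N \<setminus>\<^sub>N D \<setminus>\<^sub>N H)) (lift_mark M)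
          (par_net (lift_net (N \<setminus>\<^sub>N D)) (lift_env (cenv H)) \<setminus>\<^sub>N (Inl ` H - trans (cenv H)))
          (union_mark M (\<lambda>_. c)) (Inl ` L)"
      using bndc envok unfolding BNDC_def by blast
    then show ?thesis unfolding S_def Cn_def cmpn_def X_def[symmetric] XY .
  qed
  have key: "\<exists>K. fires S (lift_mark M) (filter (\<lambda>u. u \<in> Inl ` L) (map Inl s')) K \<and>
                 lang Y (proj K) = lang Y M'"
    if f': "fires X M s' M'" for s' M'
  proof -
    define c where "c = cnt H s'"
    obtain R where R: "(lift_mark M, union_mark M (\<lambda>_. c)) \<in> R"
      "weak_sim_step S Cn (Inl ` L) R" "weak_sim_step Cn S (Inl ` L) (converse R)"
      using bis[of c] unfolding weak_bisimilar_def by blast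
    have "M = proj (union_mark M (\<lambda>_. c))" by simp
    moreover have "cnt H s' \<le> union_mark M (\<lambda>_. c) (Inr 0)" by (simp add: c_def union_mark_def)
    ultimately obtain C' where C': "fires Cn (union_mark M (\<lambda>_. c)) (map Inl s') C'" "proj C' = M'"
      "C' (Inr 0) = union_mark M (\<lambda>_. c) (Inr 0) - cnt H s'"
      using fire_lifted[OF f'] unfolding Cn_def by blast
    have z: "C' (Inr 0) = 0" using C'(3) by (simp add: c_def union_mark_def)
    obtain K where K: "(K, C') \<in> R" "fires S (lift_mark M) (filter (\<lambda>u. u \<in> Inl ` L) (map Inl s')) K"
      using track[OF R(3) trS C'(1) R(1)] by blast
    have "w \<in> lang Y (proj K) \<longleftrightarrow> w \<in> lang Y (proj C')" for w
      using lang_zero[of X L H Y R K C' w] trX trY d2 fY eY R(2,3) K(1) z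
      unfolding S_def Cn_def by blast
    then have "lang Y (proj K) = lang Y M'" using C'(2) by blast
    then show ?thesis using K(2) by blast
  qed
  have hX: "enabled X M1 h" using enh hH d3 by (auto simp: X_def)
  have f2: "fires X M (s @ [h]) (fire N M1 h)"
  proof -
    have "fires X M1 [h] (fire N M1 h)" using hX by (simp add: X_def)
    then show ?thesis using fs fires_append[of X M s "[h]" "fire N M1 h"] unfolding X_def by blast
  qed
  obtain K1 where K1: "fires S (lift_mark M) (filter (\<lambda>u. u \<in> Inl ` L) (map Inl s)) K1"
    "lang Y (proj K1) = lang Y M1" using key fs unfolding X_def by blast
  obtain K2 where K2: "fires S (lift_mark M) (filter (\<lambda>u. u \<in> Inl ` L) (map Inl (s @ [h]))) K2"
    "lang Y (proj K2) = lang Y (fire N M1 h)" using key[OF f2] by blast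
  have "Inl h \<notin> Inl ` L" using hH d2 by blast
  then have "filter (\<lambda>u. u \<in> Inl ` L) (map Inl (s @ [h])) = filter (\<lambda>u. u \<in> Inl ` L) (map Inl s)"
    by simp
  then have "K1 = K2" using fires_det K1(1) K2(1) by metis
  then show ?thesis using K1(2) K2(2) by (simp add: Y_def)
qed

theorem lemma4:
  fixes N :: "('p, 't) ptnet" and M0 :: "'p \<Rightarrow> nat" and L D H :: "'t set"
  assumes "net_wf N"
    and "trans N = L \<union> D \<union> H"
    and "L \<inter> D = {}" and "L \<inter> H = {}" and "D \<inter> H = {}"
  shows "BINI N M0 L D H \<longleftrightarrow>
         (\<forall>M1 \<in> reach N M0. \<forall>h \<in> H. \<forall>M2. fires N M1 [h] M2 \<longrightarrow>
            lang (N \<setminus>\<^sub>N (H \<union> D)) M1 = lang (N \<setminus>\<^sub>N (H \<union> D)) M2)"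
proof
  assume B: "BINI N M0 L D H"
  show "\<forall>M1 \<in> reach N M0. \<forall>h \<in> H. \<forall>M2. fires N M1 [h] M2 \<longrightarrow>
            lang (N \<setminus>\<^sub>N (H \<union> D)) M1 = lang (N \<setminus>\<^sub>N (H \<union> D)) M2"
  proof (intro ballI allI impI)
    fix M1 h M2
    assume r: "M1 \<in> reach N M0" and hH: "h \<in> H" and f: "fires N M1 [h] M2"
    have enh: "enabled N M1 h" and M2: "M2 = fire N M1 h" using f by auto
    obtain s where s: "fires N M0 s M1" using r unfolding reach_def by blast
    have "\<exists>M s'. BNDC (N \<setminus>\<^sub>N D) M L H \<and> fires (N \<setminus>\<^sub>N D) M s' M1"
      using reach_split[OF s, of D]
    proof
      assume "fires (N \<setminus>\<^sub>N D) M0 s M1"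
      moreover have "BNDC (N \<setminus>\<^sub>N D) M0 L H" using B unfolding BINI_def by blast
      ultimately show ?thesis by blast
    next
      assume "\<exists>\<upsilon> d M s'. d \<in> D \<and> fires N M0 (\<upsilon> @ [d]) M \<and> fires (N \<setminus>\<^sub>N D) M s' M1"
      then obtain \<upsilon> d M s' where a: "d \<in> D" "fires N M0 (\<upsilon> @ [d]) M" "fires (N \<setminus>\<^sub>N D) M s' M1"
        by blast
      have "BNDC (N \<setminus>\<^sub>N D) M L H" using B a(1,2) unfolding BINI_def by blast
      with a(3) show ?thesis by blast
    qed
    then obtain M s' where "BNDC (N \<setminus>\<^sub>N D) M L H" "fires (N \<setminus>\<^sub>N D) M s' M1" by blast
    from fwd[OF assms this enh hH] show "lang (N \<setminus>\<^sub>N (H \<union> D)) M1 = lang (N \<setminus>\<^sub>N (H \<union> D)) M2"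
      using M2 by simp
  qed
next
  assume C: "\<forall>M1 \<in> reach N M0. \<forall>h \<in> H. \<forall>M2. fires N M1 [h] M2 \<longrightarrow>
            lang (N \<setminus>\<^sub>N (H \<union> D)) M1 = lang (N \<setminus>\<^sub>N (H \<union> D)) M2"
  have m0: "M0 \<in> reach N M0" unfolding reach_def by (intro CollectI exI[of _ "[]"]) simp
  have b0: "BNDC (N \<setminus>\<^sub>N D) M0 L H" using bwd[OF assms(2-5) C m0] .
  have "BNDC (N \<setminus>\<^sub>N D) M L H" if "d \<in> D \<and> fires N M0 (\<upsilon> @ [d]) M" for M \<upsilon> d
  proof -
    have "M \<in> reach N M0" using that unfolding reach_def by blast
    then show ?thesis using bwd[OF assms(2-5) C] by blast
  qed
  then show "BINI N M0 L D H" using b0 unfolding BINI_def by blast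
qed


end
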